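(* For every word $w$ of positive integers and every $k\ge1$, $P(w)|_{[k]}=P(w|_{[k]})$.
   Context: $[k]=\{1,\dots,k\}$. For a tableau $T$ and set $I$, $T|_I$ is obtained by deleting all boxes whose labels are not in $I$; $w|_I$ is obtained from the word $w$ by deleting all letters not in $I$. Shifted shapes: for a strict partition $\lambda$, boxes $(i,j)$ with $i\le j\le i+\lambda_i-1$; boxes $(i,i)$ form the main diagonal. Increasing shifted tableau: entries strictly increase along rows and down columns. Shifted Hecke insertion of $x$ into an increasing shifted tableau $T$: first insert $x$ into row 1. When $x$ is inserted into a row (resp. column): (i) if $x$ is weakly larger than all entries and adjoining a box containing $x$ at the end of that row (resp. column) gives an increasing shifted tableau, do so and stop (adjoining to an empty row $i$ means adding box $(i,i)$); (ii) if $x$ is weakly larger than all entries but adjoining fails to give an increasing shifted tableau, leave the tableau unchanged and stop; (iii) otherwise let $y$ be the smallest entry strictly larger than $x$ there; replace $y$ by $x$ if the result is increasing, otherwise change nothing; in either case $y$ is output: if $x$ was inserted into a column or $y$ lies on the main diagonal, $y$ is inserted into the next column to the right (all subsequent outputs go into successive columns), otherwise into the next row below. $P(w)=(\cdots(\emptyset\leftarrow w_1)\cdots)\leftarrow w_n$. *)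

theory Defs
  imports Main
begin

text \<open>Tableaux are partial maps from boxes (i,j) (row i, column j, both starting at 1)
  to positive-integer labels.\<close>

type_synonym tableau = "nat \<times> nat \<Rightarrow> nat option"

definition strict_partition :: "nat list \<Rightarrow> bool" where
  "strict_partition lam \<longleftrightarrow> sorted_wrt (>) lam \<and> (\<forall>x\<in>set lam. 0 < x)"

definition shifted_shape :: "nat list \<Rightarrow> (nat \<times> nat) set" where
  "shifted_shape lam = {(i,j). 1 \<le> i \<and> i \<le> length lam \<and> i \<le> j \<and> j \<le> i + lam ! (i - 1) - 1}"

definition increasing :: "tableau \<Rightarrow> bool" where
  "increasing T \<longleftrightarrow>
     (\<forall>i j j' a b. T (i,j) = Some a \<longrightarrow> T (i,j') = Some b \<longrightarrow> j < j' \<longrightarrow> a < b) \<and>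
     (\<forall>i i' j a b. T (i,j) = Some a \<longrightarrow> T (i',j) = Some b \<longrightarrow> i < i' \<longrightarrow> a < b)"

definition inc_shifted_tableau :: "tableau \<Rightarrow> bool" where
  "inc_shifted_tableau T \<longleftrightarrow>
     (\<exists>lam. strict_partition lam \<and> dom T = shifted_shape lam) \<and> increasing T"

definition restrict_tab :: "tableau \<Rightarrow> nat set \<Rightarrow> tableau" where
  "restrict_tab T I = (\<lambda>p. case T p of None \<Rightarrow> None | Some v \<Rightarrow> if v \<in> I then Some v else None)"

definition restrict_word :: "nat list \<Rightarrow> nat set \<Rightarrow> nat list" where
  "restrict_word w I = filter (\<lambda>a. a \<in> I) w"

datatype ins_mode = InRow nat | InCol nat

definition row_boxes :: "tableau \<Rightarrow> nat \<Rightarrow> (nat \<times> nat) set" where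
  "row_boxes T i = {p \<in> dom T. fst p = i}"

definition col_boxes :: "tableau \<Rightarrow> nat \<Rightarrow> (nat \<times> nat) set" where
  "col_boxes T j = {p \<in> dom T. snd p = j}"

definition row_end :: "tableau \<Rightarrow> nat \<Rightarrow> nat \<times> nat" where
  "row_end T i = (if row_boxes T i = {} then (i,i) else (i, Max (snd ` row_boxes T i) + 1))"

definition col_end :: "tableau \<Rightarrow> nat \<Rightarrow> nat \<times> nat" where
  "col_end T j = (if col_boxes T j = {} then (1,j) else (Max (fst ` col_boxes T j) + 1, j))"

definition mode_boxes :: "tableau \<Rightarrow> ins_mode \<Rightarrow> (nat \<times> nat) set" where
  "mode_boxes T m = (case m of InRow i \<Rightarrow> row_boxes T i | InCol j \<Rightarrow> col_boxes T j)"

definition mode_end :: "tableau \<Rightarrow> ins_mode \<Rightarrow> nat \<times> nat" where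
  "mode_end T m = (case m of InRow i \<Rightarrow> row_end T i | InCol j \<Rightarrow> col_end T j)"

text \<open>Shifted Hecke insertion of x into row/column m of T, with a fuel argument that
  bounds the number of bumping steps (the fuel supplied by hecke_insert below is
  always sufficient, since every step moves to a strictly later row or column).\<close>
fun hecke_ins :: "nat \<Rightarrow> ins_mode \<Rightarrow> nat \<Rightarrow> tableau \<Rightarrow> tableau" where
  "hecke_ins 0 m x T = T"
| "hecke_ins (Suc n) m x T =
     (let B = mode_boxes T m; vals = (\<lambda>p. the (T p)) ` B in
      if \<forall>v\<in>vals. v \<le> x then
        (let T' = T(mode_end T m \<mapsto> x) in if inc_shifted_tableau T' then T' else T)
      else
        (let y = Min {v \<in> vals. x < v};
             p = (THE p. p \<in> B \<and> T p = Some y);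
             T' = T(p \<mapsto> x);
             T'' = (if inc_shifted_tableau T' then T' else T);
             m' = (case m of InCol j \<Rightarrow> InCol (j + 1)
                           | InRow i \<Rightarrow> if fst p = snd p then InCol (snd p + 1) else InRow (i + 1))
         in hecke_ins n m' y T''))"

definition hecke_insert :: "tableau \<Rightarrow> nat \<Rightarrow> tableau" where
  "hecke_insert T x = hecke_ins (2 * card (dom T) + 3) (InRow 1) x T"

definition P_tab :: "nat list \<Rightarrow> tableau" where
  "P_tab w = foldl hecke_insert Map.empty w"

end

theory Submission
  imports Defs
begin


definition shape_ok :: "(nat \<times> nat) set \<Rightarrow> bool" where
  "shape_ok D \<longleftrightarrow> finite D \<and> (\<forall>i j. (i,j) \<in> D \<longrightarrow> 1 \<le> i \<and> i \<le> j)
     \<and> (\<forall>i j. (i,j) \<in> D \<longrightarrow> i < j \<longrightarrow> (i,j-1) \<in> D)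
     \<and> (\<forall>i j. (i,j) \<in> D \<longrightarrow> 1 < i \<longrightarrow> (i-1,j) \<in> D)"

lemma left_closed:
  assumes "shape_ok D" "(i,j') \<in> D" "i \<le> j" "j \<le> j'"
  shows "(i,j) \<in> D"
proof -
  have "(i, j' - d) \<in> D" if "d \<le> j' - i" for d
    using that
  proof (induction d)
    case 0 then show ?case using assms(2) by simp
  next
    case (Suc d)
    then have h: "(i, j' - d) \<in> D" by simp
    have "i < j' - d" using Suc.prems by arith
    then have "(i, j' - d - 1) \<in> D" using h assms(1) unfolding shape_ok_def by blast
    then show ?case by simp
  qed
  from this[of "j' - j"] show ?thesis using assms(3,4) by simp
qed

lemma up_closed:
  assumes "shape_ok D" "(i',j) \<in> D" "1 \<le> i" "i \<le> i'"
  shows "(i,j) \<in> D"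
proof -
  have "(i' - d, j) \<in> D" if "d \<le> i' - i" for d
    using that
  proof (induction d)
    case 0 then show ?case using assms(2) by simp
  next
    case (Suc d)
    then have h: "(i' - d, j) \<in> D" by simp
    have "1 < i' - d" using Suc.prems assms(3) by arith
    then have "(i' - d - 1, j) \<in> D" using h assms(1) unfolding shape_ok_def by blast
    then show ?case by simp
  qed
  from this[of "i' - i"] show ?thesis using assms(3,4) by simp
qed

lemma shifted_shape_ok:
  assumes "strict_partition lam"
  shows "shape_ok (shifted_shape lam)"
proof -
  have sw: "sorted_wrt (>) lam" and pos: "\<forall>x\<in>set lam. 0 < x" using assms unfolding strict_partition_def by auto
  have fin: "finite (shifted_shape lam)"
  proof (rule finite_subset)
    show "shifted_shape lam \<subseteq> {0..length lam} \<times> {0..length lam + sum_list lam}"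
    proof
      fix p assume "p \<in> shifted_shape lam"
      then obtain i j where p: "p = (i,j)" "1 \<le> i" "i \<le> length lam" "i \<le> j" "j \<le> i + lam ! (i - 1) - 1"
        unfolding shifted_shape_def by auto
      have "lam ! (i-1) \<le> sum_list lam" using p(2,3) by (intro elem_le_sum_list) auto
      then show "p \<in> {0..length lam} \<times> {0..length lam + sum_list lam}" using p by auto
    qed
  qed auto
  have up: "(i-1,j) \<in> shifted_shape lam" if "(i,j) \<in> shifted_shape lam" "1 < i" for i j
  proof -
    have h: "i \<le> length lam" "i \<le> j" "j \<le> i + lam ! (i - 1) - 1" using that unfolding shifted_shape_def by auto
    have "lam ! (i-1) < lam ! (i-2)" using sw h that by (auto simp: sorted_wrt_iff_nth_less)
    then show ?thesis using h that unfolding shifted_shape_def by (auto simp: numeral_2_eq_2)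
  qed
  have h1: "1 \<le> i \<and> i \<le> j" if "(i,j) \<in> shifted_shape lam" for i j
    using that unfolding shifted_shape_def by simp
  have h2: "(i,j-1) \<in> shifted_shape lam" if "(i,j) \<in> shifted_shape lam" "i < j" for i j
    using that unfolding shifted_shape_def by (simp; linarith)
  show ?thesis unfolding shape_ok_def using fin up h1 h2 by blast
qed

lemma shape_ok_shifted:
  assumes "shape_ok D"
  shows "\<exists>lam. strict_partition lam \<and> D = shifted_shape lam"
proof -
  have fin: "finite D" using assms unfolding shape_ok_def by auto
  define N where "N = (if D = {} then 0 else Max (fst ` D))"
  define M where "M = (\<lambda>i. Max {j. (i,j) \<in> D})"
  define lam where "lam = map (\<lambda>i. M i + 1 - i) [1..<N+1]"
  have rowfin: "finite {j. (i,j) \<in> D}" for i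
    using finite_imageI[OF fin, of snd] by (rule finite_subset[rotated]) force
  have rowne: "{j. (i,j) \<in> D} \<noteq> {}" if "1 \<le> i" "i \<le> N" for i
  proof -
    have "D \<noteq> {}" using that N_def by auto
    then have "N \<in> fst ` D" unfolding N_def using fin by auto
    then obtain c where "(N,c) \<in> D" by force
    then have "(i,c) \<in> D" using up_closed[OF assms] that by blast
    then show ?thesis by auto
  qed
  have Mmem: "(i, M i) \<in> D" if "1 \<le> i" "i \<le> N" for i
    using Max_in[OF rowfin rowne[OF that]] unfolding M_def by auto
  have Mge: "i \<le> M i" if "1 \<le> i" "i \<le> N" for i
    using Mmem[OF that] assms unfolding shape_ok_def by auto
  have memD: "(i,j) \<in> D \<longleftrightarrow> 1 \<le> i \<and> i \<le> N \<and> i \<le> j \<and> j \<le> M i" for i j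
  proof
    assume h: "(i,j) \<in> D"
    then have "1 \<le> i" "i \<le> j" using assms unfolding shape_ok_def by auto
    moreover have "i \<le> N" using h fin unfolding N_def by (auto intro!: Max_ge simp: image_iff) (metis fst_conv)
    moreover have "j \<le> M i" using h rowfin unfolding M_def by auto
    ultimately show "1 \<le> i \<and> i \<le> N \<and> i \<le> j \<and> j \<le> M i" by auto
  next
    assume "1 \<le> i \<and> i \<le> N \<and> i \<le> j \<and> j \<le> M i"
    then show "(i,j) \<in> D" using left_closed[OF assms Mmem] by auto
  qed
  have Mmono: "M b \<le> M a" if "1 \<le> a" "a \<le> b" "b \<le> N" for a b
  proof -
    have "(a, M b) \<in> D" using up_closed[OF assms Mmem[of b]] that by auto
    then show ?thesis using memD by auto
  qed
  have len: "length lam = N" unfolding lam_def by simp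
  have nth: "lam ! (i-1) = M i + 1 - i" if "1 \<le> i" "i \<le> N" for i
  proof -
    have "[1..<N+1] ! (i-1) = i" using that by (simp del: upt_Suc)
    moreover have "i - 1 < length [1..<N+1]" using that by (simp del: upt_Suc)
    ultimately show ?thesis unfolding lam_def by (simp del: upt_Suc)
  qed
  have sp: "strict_partition lam"
    unfolding strict_partition_def
  proof
    show "sorted_wrt (>) lam"
      unfolding sorted_wrt_iff_nth_less len
    proof (intro allI impI)
      fix a b assume ab: "a < b" "b < N"
      have "lam ! a = M (Suc a) + 1 - Suc a" using nth[of "Suc a"] ab by auto
      moreover have "lam ! b = M (Suc b) + 1 - Suc b" using nth[of "Suc b"] ab by auto
      moreover have "M (Suc b) \<le> M (Suc a)" using Mmono[of "Suc a" "Suc b"] ab by auto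
      moreover have "Suc b \<le> M (Suc b)" using Mge[of "Suc b"] ab by auto
      ultimately show "lam ! b < lam ! a" using ab by auto
    qed
    show "\<forall>x\<in>set lam. 0 < x" unfolding lam_def
    proof
      fix x assume "x \<in> set (map (\<lambda>i. M i + 1 - i) [1..<N+1])"
      then obtain i where i: "1 \<le> i" "i \<le> N" "x = M i + 1 - i" by (auto simp del: upt_Suc)
      then show "0 < x" using Mge[OF i(1,2)] by simp
    qed
  qed
  have "D = shifted_shape lam"
  proof (rule set_eqI)
    fix p :: "nat \<times> nat"
    obtain i j where p: "p = (i,j)" by force
    show "p \<in> D \<longleftrightarrow> p \<in> shifted_shape lam"
      unfolding p memD shifted_shape_def len using nth Mge by auto
  qed
  then show ?thesis using sp by auto
qed

lemma shape_iff: "(\<exists>lam. strict_partition lam \<and> D = shifted_shape lam) \<longleftrightarrow> shape_ok D"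
  using shape_ok_shifted shifted_shape_ok by auto



abbreviation rt :: "nat \<Rightarrow> tableau \<Rightarrow> tableau" where "rt k T \<equiv> restrict_tab T {..k}"

definition good :: "tableau \<Rightarrow> bool" where
  "good T \<longleftrightarrow> shape_ok (dom T) \<and> increasing T"

lemma inc_good: "inc_shifted_tableau T \<longleftrightarrow> good T"
  unfolding inc_shifted_tableau_def good_def using shape_iff[of "dom T"] by blast

lemma rt_Some: "rt k T q = Some v \<longleftrightarrow> T q = Some v \<and> v \<le> k"
  unfolding restrict_tab_def by (cases "T q") auto

lemma rt_None: "rt k T q = None \<longleftrightarrow> (\<forall>v. T q = Some v \<longrightarrow> k < v)"
  unfolding restrict_tab_def by (cases "T q") auto

lemma dom_rt: "dom (rt k T) = {q. \<exists>v. T q = Some v \<and> v \<le> k}"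
  using rt_Some by (auto simp: dom_def)

lemma dom_rt_sub: "dom (rt k T) \<subseteq> dom T"
  using dom_rt by auto

lemma rt_upd_le: "x \<le> k \<Longrightarrow> rt k (T(e\<mapsto>x)) = (rt k T)(e\<mapsto>x)"
  unfolding restrict_tab_def by (rule ext) auto

lemma rt_upd_gt: "k < x \<Longrightarrow> rt k (T(e\<mapsto>x)) = (rt k T)(e := None)"
  unfolding restrict_tab_def by (rule ext) auto

lemma inc_row: "increasing T \<Longrightarrow> T (i,j) = Some u \<Longrightarrow> T (i,j') = Some v \<Longrightarrow> j < j' \<Longrightarrow> u < v"
  unfolding increasing_def by blast

lemma inc_col: "increasing T \<Longrightarrow> T (i,j) = Some u \<Longrightarrow> T (i',j) = Some v \<Longrightarrow> i < i' \<Longrightarrow> u < v"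
  unfolding increasing_def by blast

lemma inc_row_le: "increasing T \<Longrightarrow> T (i,j) = Some u \<Longrightarrow> T (i,j') = Some v \<Longrightarrow> j \<le> j' \<Longrightarrow> u \<le> v"
  by (cases "j = j'") (auto dest: inc_row)

lemma inc_col_le: "increasing T \<Longrightarrow> T (i,j) = Some u \<Longrightarrow> T (i',j) = Some v \<Longrightarrow> i \<le> i' \<Longrightarrow> u \<le> v"
  by (cases "i = i'") (auto dest: inc_col)

lemma good_fin: "good T \<Longrightarrow> finite (dom T)"
  unfolding good_def shape_ok_def by auto

lemma good_box: "good T \<Longrightarrow> (i,j) \<in> dom T \<Longrightarrow> 1 \<le> i \<and> i \<le> j"
  unfolding good_def shape_ok_def by auto

lemma good_left: "good T \<Longrightarrow> (i,j) \<in> dom T \<Longrightarrow> i < j \<Longrightarrow> (i,j-1) \<in> dom T"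
  unfolding good_def shape_ok_def by auto

lemma good_up: "good T \<Longrightarrow> (i,j) \<in> dom T \<Longrightarrow> 1 < i \<Longrightarrow> (i-1,j) \<in> dom T"
  unfolding good_def shape_ok_def by auto

lemma good_rt: assumes "good T" shows "good (rt k T)"
proof -
  have inc: "increasing T" using assms good_def by auto
  have "increasing (rt k T)" using inc unfolding increasing_def rt_Some by blast
  moreover have "shape_ok (dom (rt k T))"
    unfolding shape_ok_def
  proof (intro conjI allI impI)
    show "finite (dom (rt k T))" using good_fin[OF assms] dom_rt_sub finite_subset by blast
  next
    fix i j assume "(i,j) \<in> dom (rt k T)"
    then show "1 \<le> i" "i \<le> j" using good_box[OF assms] dom_rt_sub by blast+
  next
    fix i j assume h: "(i,j) \<in> dom (rt k T)" "i < j"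
    then obtain v where v: "T (i,j) = Some v" "v \<le> k" using dom_rt by auto
    then obtain u where u: "T (i,j-1) = Some u" using good_left[OF assms, of i j] h by auto
    have "u < v" using inc_row[OF inc u v(1)] h by auto
    then show "(i,j-1) \<in> dom (rt k T)" using u v dom_rt by auto
  next
    fix i j assume h: "(i,j) \<in> dom (rt k T)" "1 < i"
    then obtain v where v: "T (i,j) = Some v" "v \<le> k" using dom_rt by auto
    then obtain u where u: "T (i-1,j) = Some u" using good_up[OF assms, of i j] h by auto
    have "u < v" using inc_col[OF inc u v(1)] h by auto
    then show "(i-1,j) \<in> dom (rt k T)" using u v dom_rt by auto
  qed
  ultimately show ?thesis unfolding good_def by auto
qed

lemma good_upd:
  assumes g: "good T" and xk: "x \<le> k" and ey: "\<forall>y. T e = Some y \<longrightarrow> x < y"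
    and gr: "good (rt k (T(e\<mapsto>x)))"
  shows "good (T(e\<mapsto>x))"
proof -
  obtain a b where e: "e = (a,b)" by force
  define R' where "R' = rt k (T(e\<mapsto>x))"
  have R'e: "R' e = Some x" unfolding R'_def using rt_upd_le[OF xk] by simp
  have R'o: "R' q = rt k T q" if "q \<noteq> e" for q unfolding R'_def using rt_upd_le[OF xk] that by simp
  have gR: "good R'" using gr R'_def by simp
  have inc: "increasing T" using g good_def by auto
  have incR: "increasing R'" using gR good_def by auto
  have ab: "1 \<le> a" "a \<le> b" using good_box[OF gR, of a b] R'e e by auto
  have domT': "dom (T(e\<mapsto>x)) = insert e (dom T)" by auto
  have domR': "dom R' \<subseteq> dom (T(e\<mapsto>x))" unfolding R'_def using dom_rt_sub by blast
  have leftv: "\<exists>w. T (a,b-1) = Some w \<and> w < x" if "a < b"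
  proof -
    have "(a,b-1) \<in> dom R'" using good_left[OF gR, of a b] R'e e that by auto
    then obtain w where w: "R' (a,b-1) = Some w" by auto
    have ne: "(a,b-1) \<noteq> e" using e that by auto
    have "T (a,b-1) = Some w" using w R'o[OF ne] rt_Some by metis
    moreover have "w < x" using inc_row[OF incR w, of b x] R'e e that by auto
    ultimately show ?thesis by auto
  qed
  have upv: "\<exists>w. T (a-1,b) = Some w \<and> w < x" if "1 < a"
  proof -
    have "(a-1,b) \<in> dom R'" using good_up[OF gR, of a b] R'e e that by auto
    then obtain w where w: "R' (a-1,b) = Some w" by auto
    have ne: "(a-1,b) \<noteq> e" using e that by auto
    have "T (a-1,b) = Some w" using w R'o[OF ne] rt_Some by metis
    moreover have "w < x" using inc_col[OF incR w, of a x] R'e e that by auto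
    ultimately show ?thesis by auto
  qed
  have shape: "shape_ok (dom (T(e\<mapsto>x)))"
    unfolding shape_ok_def domT'
  proof (intro conjI allI impI)
    show "finite (insert e (dom T))" using good_fin[OF g] by auto
  next
    fix i j assume "(i,j) \<in> insert e (dom T)"
    then show "1 \<le> i" "i \<le> j" using good_box[OF g] ab e by auto
  next
    fix i j assume h: "(i,j) \<in> insert e (dom T)" "i < j"
    show "(i,j-1) \<in> insert e (dom T)"
    proof (cases "(i,j) = e")
      case True then show ?thesis using leftv h e by auto
    next
      case False then show ?thesis using good_left[OF g] h by auto
    qed
  next
    fix i j assume h: "(i,j) \<in> insert e (dom T)" "1 < i"
    show "(i-1,j) \<in> insert e (dom T)"
    proof (cases "(i,j) = e")
      case True then show ?thesis using upv h e by auto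
    next
      case False then show ?thesis using good_up[OF g] h by auto
    qed
  qed
  have incT': "increasing (T(e\<mapsto>x))"
    unfolding increasing_def
  proof (intro conjI allI impI)
    fix i j j' u v assume h: "(T(e\<mapsto>x)) (i,j) = Some u" "(T(e\<mapsto>x)) (i,j') = Some v" "j < j'"
    show "u < v"
    proof (cases "(i,j) = e")
      case True
      then have u: "u = x" "i = a" "j = b" using h e by auto
      have ne: "(i,j') \<noteq> e" using True h(3) by auto
      then have v: "T (i,j') = Some v" using h by auto
      show ?thesis
      proof (cases "T e")
        case None
        have "(i,j) \<in> dom T" using left_closed[of "dom T" i j' j] g good_def v u ab h(3) by auto
        then show ?thesis using None True by auto
      next
        case (Some y)
        then show ?thesis using inc_row[OF inc _ v h(3), of y] True ey u by auto
      qed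
    next
      case False
      then have u: "T (i,j) = Some u" using h by auto
      show ?thesis
      proof (cases "(i,j') = e")
        case True
        then have v: "v = x" "i = a" "j' = b" using h e by auto
        have "i \<le> j" using good_box[OF g, of i j] u by auto
        then have "a < b" using v h(3) by auto
        then obtain w where w: "T (a,b-1) = Some w" "w < x" using leftv by auto
        have "u \<le> w" using inc_row_le[OF inc u, of "b-1" w] w v h(3) by auto
        then show ?thesis using w v by auto
      next
        case False
        then show ?thesis using inc_row[OF inc u _ h(3), of v] h by auto
      qed
    qed
  next
    fix i i' j u v assume h: "(T(e\<mapsto>x)) (i,j) = Some u" "(T(e\<mapsto>x)) (i',j) = Some v" "i < i'"
    show "u < v"
    proof (cases "(i,j) = e")
      case True
      then have u: "u = x" "i = a" "j = b" using h e by auto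
      have ne: "(i',j) \<noteq> e" using True h(3) by auto
      then have v: "T (i',j) = Some v" using h by auto
      show ?thesis
      proof (cases "T e")
        case None
        have "(i,j) \<in> dom T" using up_closed[of "dom T" i' j i] g good_def v u ab h(3) by auto
        then show ?thesis using None True by auto
      next
        case (Some y)
        then show ?thesis using inc_col[OF inc _ v h(3), of y] True ey u by auto
      qed
    next
      case False
      then have u: "T (i,j) = Some u" using h by auto
      show ?thesis
      proof (cases "(i',j) = e")
        case True
        then have v: "v = x" "i' = a" "j = b" using h e by auto
        have "1 \<le> i" using good_box[OF g, of i j] u by auto
        then have "1 < a" using v h(3) by auto
        then obtain w where w: "T (a-1,b) = Some w" "w < x" using upv by auto
        have "u \<le> w" using inc_col_le[OF inc u, of "a-1" w] w v h(3) by auto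
        then show ?thesis using w v by auto
      next
        case False
        then show ?thesis using inc_col[OF inc u _ h(3), of v] h by auto
      qed
    qed
  qed
  show ?thesis using shape incT' good_def by auto
qed



definition nmode :: "ins_mode \<Rightarrow> nat \<times> nat \<Rightarrow> ins_mode" where
  "nmode m p = (case m of InCol j \<Rightarrow> InCol (j + 1)
                  | InRow i \<Rightarrow> if fst p = snd p then InCol (snd p + 1) else InRow (i + 1))"

lemma hi_adj:
  assumes "\<forall>v\<in>(\<lambda>p. the (T p)) ` mode_boxes T m. v \<le> x"
  shows "hecke_ins (Suc n) m x T = (if inc_shifted_tableau (T(mode_end T m \<mapsto> x)) then T(mode_end T m \<mapsto> x) else T)"
  using assms by (simp add: Let_def)

lemma hi_bump:
  assumes "\<not> (\<forall>v\<in>(\<lambda>p. the (T p)) ` mode_boxes T m. v \<le> x)"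
    and "y = Min {v \<in> (\<lambda>p. the (T p)) ` mode_boxes T m. x < v}"
    and "p = (THE p. p \<in> mode_boxes T m \<and> T p = Some y)"
  shows "hecke_ins (Suc n) m x T = hecke_ins n (nmode m p) y (if inc_shifted_tableau (T(p \<mapsto> x)) then T(p \<mapsto> x) else T)"
  unfolding hecke_ins.simps Let_def if_not_P[OF assms(1)] assms(2)[symmetric] assms(3)[symmetric] nmode_def ..

declare hecke_ins.simps(2)[simp del]

lemma mode_boxes_mem: "p \<in> mode_boxes T m \<longleftrightarrow> p \<in> dom T \<and> (case m of InRow i \<Rightarrow> fst p = i | InCol j \<Rightarrow> snd p = j)"
  by (cases m) (auto simp: mode_boxes_def row_boxes_def col_boxes_def)

lemma mode_boxes_sub: "mode_boxes T m \<subseteq> dom T"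
  using mode_boxes_mem by blast

lemma mode_boxes_rt: "mode_boxes (rt k T) m = {q \<in> mode_boxes T m. the (T q) \<le> k}"
  by (rule set_eqI) (auto simp: mode_boxes_mem dom_rt)

lemma mode_end_cong: "mode_boxes T m = mode_boxes T' m \<Longrightarrow> mode_end T m = mode_end T' m"
  by (cases m) (simp_all add: mode_end_def mode_boxes_def row_end_def col_end_def)

lemma end_None: assumes "finite (dom T)" shows "T (mode_end T m) = None"
proof (cases m)
  case (InRow i)
  have fin: "finite (row_boxes T i)" using assms unfolding row_boxes_def by auto
  show ?thesis
  proof (cases "row_boxes T i = {}")
    case True then show ?thesis using InRow by (auto simp: mode_end_def row_end_def row_boxes_def)
  next
    case False
    have "(i, Max (snd ` row_boxes T i) + 1) \<notin> dom T"
    proof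
      assume "(i, Max (snd ` row_boxes T i) + 1) \<in> dom T"
      then have "(i, Max (snd ` row_boxes T i) + 1) \<in> row_boxes T i" unfolding row_boxes_def by auto
      then have "Max (snd ` row_boxes T i) + 1 \<le> Max (snd ` row_boxes T i)"
        using Max_ge[OF finite_imageI[OF fin]] by (metis snd_conv image_eqI)
      then show False by simp
    qed
    then show ?thesis using InRow False by (auto simp: mode_end_def row_end_def)
  qed
next
  case (InCol j)
  have fin: "finite (col_boxes T j)" using assms unfolding col_boxes_def by auto
  show ?thesis
  proof (cases "col_boxes T j = {}")
    case True then show ?thesis using InCol by (auto simp: mode_end_def col_end_def col_boxes_def)
  next
    case False
    have "(Max (fst ` col_boxes T j) + 1, j) \<notin> dom T"
    proof
      assume "(Max (fst ` col_boxes T j) + 1, j) \<in> dom T"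
      then have "(Max (fst ` col_boxes T j) + 1, j) \<in> col_boxes T j" unfolding col_boxes_def by auto
      then have "Max (fst ` col_boxes T j) + 1 \<le> Max (fst ` col_boxes T j)"
        using Max_ge[OF finite_imageI[OF fin]] by (metis fst_conv image_eqI)
      then show False by simp
    qed
    then show ?thesis using InCol False by (auto simp: mode_end_def col_end_def)
  qed
qed

lemma the_box:
  assumes inc: "increasing T" and q: "q \<in> mode_boxes T m" and y: "T q = Some y"
  shows "(THE p. p \<in> mode_boxes T m \<and> T p = Some y) = q"
proof (rule the_equality)
  show "q \<in> mode_boxes T m \<and> T q = Some y" using q y by auto
next
  fix p assume p: "p \<in> mode_boxes T m \<and> T p = Some y"
  obtain a b where pq: "p = (a,b)" by force
  obtain c d where qq: "q = (c,d)" by force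
  show "p = q"
  proof (cases m)
    case (InRow i)
    then have "a = c" using p q pq qq mode_boxes_mem by auto
    moreover have "b = d"
    proof (rule ccontr)
      assume "b \<noteq> d"
      then have "b < d \<or> d < b" by auto
      then show False using inc_row[OF inc, of a b y d y] inc_row[OF inc, of a d y b y] p y pq qq \<open>a = c\<close> by auto
    qed
    ultimately show ?thesis using pq qq by simp
  next
    case (InCol j)
    then have "b = d" using p q pq qq mode_boxes_mem by auto
    moreover have "a = c"
    proof (rule ccontr)
      assume "a \<noteq> c"
      then have "a < c \<or> c < a" by auto
      then show False using inc_col[OF inc, of a b y c y] inc_col[OF inc, of c b y a y] p y pq qq \<open>b = d\<close> by auto
    qed
    ultimately show ?thesis using pq qq by simp
  qed
qed

definition pot :: "ins_mode \<Rightarrow> (nat \<times> nat) set \<Rightarrow> nat" where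
  "pot m D = (case m of InRow i \<Rightarrow> card ({i..} \<inter> fst ` D) + card (snd ` D)
                | InCol j \<Rightarrow> card ({j..} \<inter> snd ` D))"

lemma pot_dec:
  assumes fin: "finite D" and p: "p \<in> D" and pm: "case m of InRow i \<Rightarrow> fst p = i | InCol j \<Rightarrow> snd p = j"
  shows "pot (nmode m p) D < pot m D"
proof (cases m)
  case (InRow i)
  have f1: "finite ({i..} \<inter> fst ` D)" using fin by auto
  have i: "i \<in> {i..} \<inter> fst ` D" using p pm InRow by auto
  show ?thesis
  proof (cases "fst p = snd p")
    case True
    have "card ({snd p + 1..} \<inter> snd ` D) \<le> card (snd ` D)" using fin by (intro card_mono) auto
    moreover have "0 < card ({i..} \<inter> fst ` D)" using f1 i card_gt_0_iff by blast
    ultimately show ?thesis using InRow True by (simp add: nmode_def pot_def)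
  next
    case False
    have sub: "{i+1..} \<inter> fst ` D \<subseteq> {i..} \<inter> fst ` D" by auto
    have "i \<notin> {i+1..} \<inter> fst ` D" by auto
    then have "{i+1..} \<inter> fst ` D \<subset> {i..} \<inter> fst ` D" using sub i by blast
    then have "card ({i+1..} \<inter> fst ` D) < card ({i..} \<inter> fst ` D)" using f1 psubset_card_mono by blast
    then show ?thesis using InRow False by (simp add: nmode_def pot_def)
  qed
next
  case (InCol j)
  have f1: "finite ({j..} \<inter> snd ` D)" using fin by auto
  have j: "j \<in> {j..} \<inter> snd ` D" using p pm InCol by auto
  have sub: "{j+1..} \<inter> snd ` D \<subseteq> {j..} \<inter> snd ` D" by auto
  have "j \<notin> {j+1..} \<inter> snd ` D" by auto
  then have "{j+1..} \<inter> snd ` D \<subset> {j..} \<inter> snd ` D" using sub j by blast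
  then have "card ({j+1..} \<inter> snd ` D) < card ({j..} \<inter> snd ` D)" using f1 psubset_card_mono by blast
  then show ?thesis using InCol by (simp add: nmode_def pot_def)
qed

lemma pot_bound: assumes "finite D" shows "pot (InRow 1) D \<le> 2 * card D"
proof -
  have "card ({1..} \<inter> fst ` D) \<le> card (fst ` D)" using assms by (intro card_mono) auto
  also have "\<dots> \<le> card D" by (rule card_image_le[OF assms])
  finally have a: "card ({1..} \<inter> fst ` D) \<le> card D" .
  have "card (snd ` D) \<le> card D" by (rule card_image_le[OF assms])
  then show ?thesis using a by (simp add: pot_def)
qed



lemma end_at:
  assumes g: "good T" and p: "p \<in> mode_boxes T m" and py: "T p = Some y"
    and RB: "mode_boxes R m = {q \<in> mode_boxes T m. the (T q) < y}"
  shows "mode_end R m = p"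
proof -
  have inc: "increasing T" using g good_def by auto
  have sh: "shape_ok (dom T)" using g good_def by auto
  obtain a c where pac: "p = (a,c)" by force
  have ac: "1 \<le> a" "a \<le> c" using good_box[OF g, of a c] p pac mode_boxes_sub by auto
  show ?thesis
  proof (cases m)
    case (InRow i)
    have ai: "a = i" using p pac InRow mode_boxes_mem by auto
    have S: "row_boxes R i = {(i,j) | j. i \<le> j \<and> j < c}"
    proof -
      have "row_boxes R i = mode_boxes R m" using InRow mode_boxes_def by simp
      also have "\<dots> = {(i,j) | j. i \<le> j \<and> j < c}"
      proof (rule set_eqI, rule iffI)
        fix q assume "q \<in> mode_boxes R m"
        then have q: "q \<in> mode_boxes T m" "the (T q) < y" using RB by auto
        obtain j u where qj: "q = (i,j)" "T q = Some u" using q(1) InRow mode_boxes_mem by (cases q) auto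
        have "i \<le> j" using good_box[OF g, of i j] qj by auto
        moreover have "j < c"
        proof (rule ccontr)
          assume "\<not> j < c"
          then have "y \<le> u" using inc_row_le[OF inc, of i c y j u] py pac ai qj by auto
          then show False using q qj by auto
        qed
        ultimately show "q \<in> {(i,j) | j. i \<le> j \<and> j < c}" using qj by auto
      next
        fix q assume "q \<in> {(i,j) | j. i \<le> j \<and> j < c}"
        then obtain j where qj: "q = (i,j)" "i \<le> j" "j < c" by auto
        have "(i,c) \<in> dom T" using p pac ai mode_boxes_sub by blast
        then have "(i,j) \<in> dom T" using left_closed[OF sh, of i c j] qj by auto
        then obtain u where u: "T (i,j) = Some u" by auto
        have "u < y" using inc_row[OF inc u, of c y] py pac ai qj by auto
        then show "q \<in> mode_boxes R m" using RB qj u InRow mode_boxes_mem by auto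
      qed
      finally show ?thesis .
    qed
    show ?thesis
    proof (cases "c = i")
      case True
      then have "row_boxes R i = {}" using S by auto
      then show ?thesis using InRow True pac ai by (simp add: mode_end_def row_end_def)
    next
      case False
      then have ne: "row_boxes R i \<noteq> {}" using S ac ai by auto
      have "snd ` row_boxes R i = {i..<c}" unfolding S by (auto simp: image_iff)
      then have "Max (snd ` row_boxes R i) = c - 1" using False ac ai by (auto simp: Max_eq_iff)
      then show ?thesis using InRow ne pac ai False ac by (simp add: mode_end_def row_end_def)
    qed
  next
    case (InCol j)
    have cj: "c = j" using p pac InCol mode_boxes_mem by auto
    have S: "col_boxes R j = {(i,j) | i. 1 \<le> i \<and> i < a}"
    proof -
      have "col_boxes R j = mode_boxes R m" using InCol mode_boxes_def by simp
      also have "\<dots> = {(i,j) | i. 1 \<le> i \<and> i < a}"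
      proof (rule set_eqI, rule iffI)
        fix q assume "q \<in> mode_boxes R m"
        then have q: "q \<in> mode_boxes T m" "the (T q) < y" using RB by auto
        obtain i u where qj: "q = (i,j)" "T q = Some u" using q(1) InCol mode_boxes_mem by (cases q) auto
        have "1 \<le> i" using good_box[OF g, of i j] qj by auto
        moreover have "i < a"
        proof (rule ccontr)
          assume "\<not> i < a"
          then have "y \<le> u" using inc_col_le[OF inc, of a j y i u] py pac cj qj by auto
          then show False using q qj by auto
        qed
        ultimately show "q \<in> {(i,j) | i. 1 \<le> i \<and> i < a}" using qj by auto
      next
        fix q assume "q \<in> {(i,j) | i. 1 \<le> i \<and> i < a}"
        then obtain i where qj: "q = (i,j)" "1 \<le> i" "i < a" by auto
        have "(a,j) \<in> dom T" using p pac cj mode_boxes_sub by blast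
        then have "(i,j) \<in> dom T" using up_closed[OF sh, of a j i] qj by auto
        then obtain u where u: "T (i,j) = Some u" by auto
        have "u < y" using inc_col[OF inc u, of a y] py pac cj qj by auto
        then show "q \<in> mode_boxes R m" using RB qj u InCol mode_boxes_mem by auto
      qed
      finally show ?thesis .
    qed
    show ?thesis
    proof (cases "a = 1")
      case True
      then have "col_boxes R j = {}" using S by auto
      then show ?thesis using InCol True pac cj by (simp add: mode_end_def col_end_def)
    next
      case False
      then have ne: "col_boxes R j \<noteq> {}" using S ac by auto
      have "fst ` col_boxes R j = {1..<a}" unfolding S by (auto simp: image_iff)
      then have "Max (fst ` col_boxes R j) = a - 1" using False ac by (auto simp: Max_eq_iff)
      then show ?thesis using InCol ne pac cj False ac by (simp add: mode_end_def col_end_def)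
    qed
  qed
qed

lemma big:
  assumes "increasing T" "finite (dom T)" "k < x"
  shows "rt k (hecke_ins n m x T) = rt k T"
  using assms
proof (induction n arbitrary: m x T)
  case 0 then show ?case by simp
next
  case (Suc n)
  define vals where "vals = (\<lambda>p. the (T p)) ` mode_boxes T m"
  have finB: "finite (mode_boxes T m)" using Suc.prems(2) mode_boxes_sub finite_subset by blast
  show ?case
  proof (cases "\<forall>v\<in>vals. v \<le> x")
    case True
    define e where "e = mode_end T m"
    have eN: "T e = None" using end_None[OF Suc.prems(2)] e_def by simp
    have "rt k (T(e\<mapsto>x)) = rt k T" using rt_upd_gt[OF Suc.prems(3)] eN rt_None[of T k e] by (auto simp: fun_upd_idem)
    then show ?thesis using hi_adj[of T m x n] True vals_def e_def by simp
  next
    case False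
    define y where "y = Min {v \<in> vals. x < v}"
    define p where "p = (THE p. p \<in> mode_boxes T m \<and> T p = Some y)"
    have fin: "finite {v \<in> vals. x < v}" using finB vals_def by auto
    have ne: "{v \<in> vals. x < v} \<noteq> {}" using False by auto
    have yin: "y \<in> {v \<in> vals. x < v}" using Min_in[OF fin ne] y_def by simp
    then obtain q where q: "q \<in> mode_boxes T m" "the (T q) = y" using vals_def by auto
    have Tq: "T q = Some y" using q mode_boxes_sub by fastforce
    have pq: "p = q" using the_box[OF Suc.prems(1) q(1) Tq] p_def by simp
    define T'' where "T'' = (if inc_shifted_tableau (T(p \<mapsto> x)) then T(p \<mapsto> x) else T)"
    have hi: "hecke_ins (Suc n) m x T = hecke_ins n (nmode m p) y T''"
      using hi_bump[OF _ y_def[unfolded vals_def] p_def] False vals_def T''_def by simp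
    have inc'': "increasing T''" using Suc.prems(1) T''_def inc_good good_def by auto
    have fin'': "finite (dom T'')" using Suc.prems(2) T''_def by auto
    have yk: "k < y" using yin Suc.prems(3) by auto
    have rt'': "rt k T'' = rt k T"
    proof -
      have "rt k T p = None" using rt_None pq Tq yk by auto
      then have "rt k (T(p\<mapsto>x)) = rt k T" using rt_upd_gt[OF Suc.prems(3)] by (auto simp: fun_upd_idem)
      then show ?thesis using T''_def by simp
    qed
    show ?thesis using hi Suc.IH[OF inc'' fin'' yk] rt'' by simp
  qed
qed



lemma cmp:
  assumes "good T" "x \<le> k" "pot m (dom T) < n" "pot m (dom (rt k T)) < n'"
  shows "rt k (hecke_ins n m x T) = hecke_ins n' m x (rt k T)"
  using assms
proof (induction n arbitrary: n' m x T)
  case 0 then show ?case by simp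
next
  case (Suc a)
  obtain b where n': "n' = Suc b" using Suc.prems(4) by (cases n') auto
  define R where "R = rt k T"
  define B where "B = mode_boxes T m"
  define vals where "vals = (\<lambda>p. the (T p)) ` B"
  define valsR where "valsR = (\<lambda>p. the (R p)) ` mode_boxes R m"
  have inc: "increasing T" using Suc.prems(1) good_def by auto
  have finT: "finite (dom T)" using good_fin[OF Suc.prems(1)] .
  have BR: "mode_boxes R m = {q \<in> B. the (T q) \<le> k}" using mode_boxes_rt R_def B_def by simp
  have RT: "R q = T q" if qR: "q \<in> mode_boxes R m" for q
  proof -
    obtain v where "R q = Some v" using qR mode_boxes_sub[of R m] by blast
    then show ?thesis using rt_Some[of T k q v] R_def by simp
  qed
  have valsR_eq: "valsR = {v \<in> vals. v \<le> k}"
  proof -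
    have "valsR = (\<lambda>p. the (T p)) ` mode_boxes R m" unfolding valsR_def using RT by (auto intro: image_cong)
    then show ?thesis unfolding BR vals_def by auto
  qed
  have finB: "finite B" using finite_subset[OF mode_boxes_sub finT] B_def by simp
  have upd_eq: "rt k (T(e\<mapsto>x)) = R(e\<mapsto>x)" for e using rt_upd_le[OF Suc.prems(2)] R_def by simp
  have good_iff: "good (T(e\<mapsto>x)) \<longleftrightarrow> good (R(e\<mapsto>x))" if "\<forall>y. T e = Some y \<longrightarrow> x < y" for e
    using good_upd[OF Suc.prems(1,2) that] good_rt[of "T(e\<mapsto>x)" k] upd_eq by auto
  have rt_if: "rt k (if inc_shifted_tableau (T(e\<mapsto>x)) then T(e\<mapsto>x) else T)
      = (if inc_shifted_tableau (R(e\<mapsto>x)) then R(e\<mapsto>x) else R)" if "\<forall>y. T e = Some y \<longrightarrow> x < y" for e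
    using good_iff[OF that] upd_eq inc_good R_def by auto
  show ?case
  proof (cases "\<forall>v\<in>vals. v \<le> x")
    case True
    have allR: "\<forall>v\<in>valsR. v \<le> x" using True valsR_eq by auto
    have BReq: "mode_boxes R m = B" using BR True vals_def Suc.prems(2) by fastforce
    have eeq: "mode_end R m = mode_end T m" using mode_end_cong[of R m T] BReq B_def by simp
    have eN: "T (mode_end T m) = None" using end_None finT by blast
    have h1: "hecke_ins (Suc a) m x T = (if inc_shifted_tableau (T(mode_end T m \<mapsto> x)) then T(mode_end T m \<mapsto> x) else T)"
      using hi_adj[of T m x a] True unfolding vals_def B_def by blast
    have h2: "hecke_ins (Suc b) m x R = (if inc_shifted_tableau (R(mode_end T m \<mapsto> x)) then R(mode_end T m \<mapsto> x) else R)"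
      using hi_adj[of R m x b] allR eeq unfolding valsR_def by simp
    show ?thesis using h1 h2 n' rt_if[of "mode_end T m"] eN R_def by simp
  next
    case False
    define y where "y = Min {v \<in> vals. x < v}"
    define p where "p = (THE p. p \<in> B \<and> T p = Some y)"
    have fin: "finite {v \<in> vals. x < v}" using finB vals_def by auto
    from False obtain v0 where v0: "v0 \<in> vals" "\<not> v0 \<le> x" by blast
    then have ne: "{v \<in> vals. x < v} \<noteq> {}" by auto
    have yin: "y \<in> {v \<in> vals. x < v}" using Min_in[OF fin ne] y_def by simp
    have ymin: "y \<le> v" if "v \<in> vals" "x < v" for v using Min_le[OF fin] that y_def by simp
    have "y \<in> vals" using yin by simp
    then obtain q where q: "q \<in> B" "y = the (T q)" unfolding vals_def by (rule imageE)
    have "q \<in> dom T" using q(1) B_def mode_boxes_sub by blast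
    then have Tq: "T q = Some y" using q(2) by auto
    have pq: "p = q" using the_box[OF inc q(1)[unfolded B_def] Tq] p_def B_def by simp
    have xy: "x < y" using yin by simp
    have pB: "p \<in> B" "T p = Some y" using pq q Tq by auto
    have pdom: "p \<in> dom T" using pB by auto
    have pm: "case m of InRow i \<Rightarrow> fst p = i | InCol j \<Rightarrow> snd p = j" using pB mode_boxes_mem B_def by blast
    define T'' where "T'' = (if inc_shifted_tableau (T(p \<mapsto> x)) then T(p \<mapsto> x) else T)"
    define R'' where "R'' = (if inc_shifted_tableau (R(p \<mapsto> x)) then R(p \<mapsto> x) else R)"
    have hiT: "hecke_ins (Suc a) m x T = hecke_ins a (nmode m p) y T''"
      using hi_bump[OF _ y_def[unfolded vals_def B_def] p_def[unfolded B_def]] False vals_def B_def T''_def by simp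
    have rt'': "rt k T'' = R''" using rt_if[of p] pB xy T''_def R''_def by simp
    have g'': "good T''" using Suc.prems(1) T''_def inc_good by auto
    have domT'': "dom T'' = dom T" using pdom T''_def by auto
    show ?thesis
    proof (cases "y \<le> k")
      case True
      have notallR: "\<not> (\<forall>v\<in>valsR. v \<le> x)" using valsR_eq yin True by auto
      have yR: "y = Min {v \<in> valsR. x < v}"
      proof (rule Min_eqI[symmetric])
        show "finite {v \<in> valsR. x < v}" using fin valsR_eq by auto
        show "\<And>v. v \<in> {v \<in> valsR. x < v} \<Longrightarrow> y \<le> v" using ymin valsR_eq by auto
        show "y \<in> {v \<in> valsR. x < v}" using yin valsR_eq True by auto
      qed
      have pR: "p = (THE p. p \<in> mode_boxes R m \<and> R p = Some y)"
      proof -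
        have "(p' \<in> mode_boxes R m \<and> R p' = Some y) \<longleftrightarrow> (p' \<in> B \<and> T p' = Some y)" for p'
        proof
          assume h: "p' \<in> mode_boxes R m \<and> R p' = Some y"
          then have "T p' = Some y" using rt_Some[of T k p' y] R_def by simp
          moreover have "p' \<in> B" using h BR by blast
          ultimately show "p' \<in> B \<and> T p' = Some y" by simp
        next
          assume h: "p' \<in> B \<and> T p' = Some y"
          then have "R p' = Some y" using rt_Some[of T k p' y] True R_def by simp
          moreover have "p' \<in> mode_boxes R m" using h BR True by simp
          ultimately show "p' \<in> mode_boxes R m \<and> R p' = Some y" by simp
        qed
        then show ?thesis using p_def by simp
      qed
      have pRd: "p \<in> mode_boxes R m" using BR pB True by auto
      have hiR: "hecke_ins (Suc b) m x R = hecke_ins b (nmode m p) y R''"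
        using hi_bump[OF notallR[unfolded valsR_def] yR[unfolded valsR_def] pR] R''_def by simp
      have pot1: "pot (nmode m p) (dom T'') < a"
        using pot_dec[OF finT pdom pm] domT'' Suc.prems(3) by simp
      have domR'': "dom R'' = dom R" using pRd mode_boxes_sub R''_def by auto
      have finR: "finite (dom R)" using good_fin[OF good_rt[OF Suc.prems(1)]] R_def by simp
      have pRdom: "p \<in> dom R" using pRd mode_boxes_sub[of R m] by blast
      have pd: "pot (nmode m p) (dom R) < pot m (dom R)" using pot_dec[OF finR pRdom pm] .
      have p4: "pot m (dom R) < Suc b" unfolding R_def using Suc.prems(4) n' by simp
      have dd: "dom (rt k T'') = dom R" using rt'' domR'' by simp
      have pot2: "pot (nmode m p) (dom (rt k T'')) < b" unfolding dd using pd p4 by linarith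
      show ?thesis using hiT hiR Suc.IH[OF g'' True pot1 pot2] rt'' n' R_def by simp
    next
      case False
      have allR: "\<forall>v\<in>valsR. v \<le> x"
      proof
        fix v assume "v \<in> valsR"
        then have v: "v \<in> vals" "v \<le> k" using valsR_eq by auto
        show "v \<le> x"
        proof (rule ccontr)
          assume "\<not> v \<le> x"
          then have "y \<le> v" using ymin v(1) by simp
          then show False using False v(2) by simp
        qed
      qed
      have RB': "mode_boxes R m = {q \<in> mode_boxes T m. the (T q) < y}"
      proof -
        have iff: "the (T q) \<le> k \<longleftrightarrow> the (T q) < y" if "q \<in> B" for q
        proof -
          have "the (T q) \<in> vals" using that vals_def by auto
          then have "x < the (T q) \<Longrightarrow> y \<le> the (T q)" using ymin by simp
          then show ?thesis using False Suc.prems(2) by (cases "x < the (T q)") auto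
        qed
        have "{q \<in> B. the (T q) \<le> k} = {q \<in> B. the (T q) < y}"
          by (rule Collect_cong) (use iff in blast)
        then show ?thesis using BR B_def by simp
      qed
      have eR: "mode_end R m = p" using end_at[OF Suc.prems(1) pB(1)[unfolded B_def] pB(2) RB'] .
      have hiR: "hecke_ins (Suc b) m x R = R''"
        using hi_adj[of R m x b] allR eR R''_def unfolding valsR_def by simp
      have inc'': "increasing T''" using g'' good_def by auto
      have fin'': "finite (dom T'')" using domT'' finT by simp
      have "rt k (hecke_ins a (nmode m p) y T'') = rt k T''" using big[OF inc'' fin''] False by simp
      then show ?thesis using hiT hiR rt'' n' R_def by simp
    qed
  qed
qed

lemma good_ins: "good T \<Longrightarrow> good (hecke_ins n m x T)"
proof (induction n arbitrary: m x T)
  case 0 then show ?case by simp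
next
  case (Suc n)
  show ?case
  proof (cases "\<forall>v\<in>(\<lambda>p. the (T p)) ` mode_boxes T m. v \<le> x")
    case True
    then show ?thesis using hi_adj[OF True, of n] Suc.prems inc_good by simp
  next
    case False
    define y where "y = Min {v \<in> (\<lambda>p. the (T p)) ` mode_boxes T m. x < v}"
    define p where "p = (THE p. p \<in> mode_boxes T m \<and> T p = Some y)"
    have "good (if inc_shifted_tableau (T(p \<mapsto> x)) then T(p \<mapsto> x) else T)" using Suc.prems inc_good by auto
    then show ?thesis using hi_bump[OF False y_def p_def, of n] Suc.IH by simp
  qed
qed

lemma ran_upd_sub: "ran (T(e\<mapsto>x)) \<subseteq> insert x (ran T)"
  by (auto simp: ran_def)

lemma ran_ins: "good T \<Longrightarrow> ran (hecke_ins n m x T) \<subseteq> insert x (ran T)"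
proof (induction n arbitrary: m x T)
  case 0 then show ?case by auto
next
  case (Suc n)
  show ?case
  proof (cases "\<forall>v\<in>(\<lambda>p. the (T p)) ` mode_boxes T m. v \<le> x")
    case True
    then show ?thesis using hi_adj[OF True, of n] ran_upd_sub[of T "mode_end T m" x] by auto
  next
    case False
    define S where "S = {v \<in> (\<lambda>p. the (T p)) ` mode_boxes T m. x < v}"
    define y where "y = Min S"
    define p where "p = (THE p. p \<in> mode_boxes T m \<and> T p = Some y)"
    define T'' where "T'' = (if inc_shifted_tableau (T(p \<mapsto> x)) then T(p \<mapsto> x) else T)"
    have h: "hecke_ins (Suc n) m x T = hecke_ins n (nmode m p) y T''"
      using hi_bump[OF False y_def[unfolded S_def] p_def, of n] T''_def by simp
    have finS: "finite S" using good_fin[OF Suc.prems] mode_boxes_sub[of T m] finite_subset S_def by fastforce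
    from False obtain v where v: "v \<in> (\<lambda>p. the (T p)) ` mode_boxes T m" "\<not> v \<le> x" by blast
    then have "v \<in> S" using S_def by simp
    then have "S \<noteq> {}" by blast
    then have "y \<in> S" using Min_in finS y_def by blast
    then obtain q where "q \<in> mode_boxes T m" "y = the (T q)" using S_def by auto
    then have "T q = Some y" using mode_boxes_sub by fastforce
    then have yran: "y \<in> ran T" by (rule ranI)
    have g'': "good T''" using Suc.prems inc_good T''_def by auto
    have r'': "ran T'' \<subseteq> insert x (ran T)" using ran_upd_sub[of T p x] T''_def by auto
    show ?thesis using h Suc.IH[OF g'', of "nmode m p" y] r'' yran by auto
  qed
qed

lemma step_le:
  assumes "good T" "x \<le> k"
  shows "rt k (hecke_insert T x) = hecke_insert (rt k T) x"
proof -
  have f1: "finite (dom T)" using good_fin[OF assms(1)] .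
  have f2: "finite (dom (rt k T))" using good_fin[OF good_rt[OF assms(1)]] .
  show ?thesis unfolding hecke_insert_def
    using cmp[OF assms] pot_bound[OF f1] pot_bound[OF f2] by simp
qed

lemma step_gt:
  assumes "good T" "k < x"
  shows "rt k (hecke_insert T x) = rt k T"
  unfolding hecke_insert_def using big[OF _ good_fin[OF assms(1)] assms(2)] assms(1) good_def by auto

lemma good_insert: "good T \<Longrightarrow> good (hecke_insert T x)"
  unfolding hecke_insert_def by (rule good_ins)

lemma main_fold:
  "good T \<Longrightarrow> rt k (foldl hecke_insert T w) = foldl hecke_insert (rt k T) (restrict_word w {..k})"
proof (induction w arbitrary: T)
  case Nil then show ?case by (simp add: restrict_word_def)
next
  case (Cons a w)
  have g: "good (hecke_insert T a)" using good_insert[OF Cons.prems] .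
  show ?case
  proof (cases "a \<le> k")
    case True
    then show ?thesis using Cons.IH[OF g] step_le[OF Cons.prems True] by (simp add: restrict_word_def)
  next
    case False
    then show ?thesis using Cons.IH[OF g] step_gt[OF Cons.prems] by (simp add: restrict_word_def)
  qed
qed

lemma ran_fold: "good T \<Longrightarrow> ran (foldl hecke_insert T w) \<subseteq> ran T \<union> set w"
proof (induction w arbitrary: T)
  case Nil then show ?case by simp
next
  case (Cons a w)
  have g: "good (hecke_insert T a)" using good_insert[OF Cons.prems] .
  have "ran (hecke_insert T a) \<subseteq> insert a (ran T)" unfolding hecke_insert_def using ran_ins[OF Cons.prems] .
  then show ?case using Cons.IH[OF g] by auto
qed

lemma good_empty: "good Map.empty"
  unfolding good_def shape_ok_def increasing_def by simp

theorem lemma2: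
  fixes w :: "nat list" and k :: nat
  assumes "\<forall>a\<in>set w. 0 < a"
    and "1 \<le> k"
  shows "restrict_tab (P_tab w) {1..k} = P_tab (restrict_word w {1..k})"
proof -
  have ranP: "ran (P_tab w) \<subseteq> set w" using ran_fold[OF good_empty, of w] unfolding P_tab_def by simp
  have "restrict_tab (P_tab w) {1..k} = rt k (P_tab w)"
  proof (rule ext)
    fix q
    show "restrict_tab (P_tab w) {1..k} q = rt k (P_tab w) q"
    proof (cases "P_tab w q")
      case None then show ?thesis by (simp add: restrict_tab_def)
    next
      case (Some v)
      then have "v \<in> ran (P_tab w)" by (rule ranI)
      then have "0 < v" using ranP assms(1) by auto
      then show ?thesis using Some by (simp add: restrict_tab_def)
    qed
  qed
  also have "\<dots> = foldl hecke_insert (rt k Map.empty) (restrict_word w {..k})"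
    unfolding P_tab_def by (rule main_fold[OF good_empty])
  also have "\<dots> = P_tab (restrict_word w {..k})"
    unfolding P_tab_def by (simp add: restrict_tab_def)
  also have "restrict_word w {..k} = restrict_word w {1..k}"
    unfolding restrict_word_def using assms(1) by (intro filter_cong) auto
  finally show ?thesis .
qed

end
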